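(* Suppose $R$ is not a local multiplicative hyperring. Then a hyperideal $I$ of $R$ is 1-absorbing primary if and only if $I$ is a primary hyperideal of $R$.
   Context: Throughout, $R$ is a commutative multiplicative hyperring ($(R,+)$ abelian group, $\circ$ a commutative associative hyperoperation into nonempty subsets, $a\circ(b+c)\subseteq a\circ b+a\circ c$, $a\circ(-b)=(-a)\circ b=-(a\circ b)$; $A\circ B=\bigcup a\circ b$), with identity $1$ ($a\in a\circ 1$); $x$ is a unit if $1\in x\circ y$ for some $y$. All hyperideals are $\mathbf{C}$-hyperideals (for any finite product $A=r_1\circ\cdots\circ r_n$, $A\cap I\neq\emptyset\Rightarrow A\subseteq I$). $\sqrt I=\{r:r^n\subseteq I\text{ for some }n\}$. Primary hyperideal: nonzero proper $Q$ with $x\circ y\subseteq Q\Rightarrow x\in Q$ or $y\in\sqrt Q$. 1-absorbing primary hyperideal: proper $I$ such that for all nonunit $x,y,z$, $x\circ y\circ z\subseteq I$ implies $x\circ y\subseteq I$ or $z\in\sqrt I$. $R$ is local if it has a unique maximal hyperideal. *)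

theory Defs
  imports Main
begin

text \<open>A commutative multiplicative hyperring: the additive group is the type 'a (an abelian
group), the hyperoperation is m :: 'a => 'a => 'a set, and e is the multiplicative identity.\<close>

definition hsetprod :: "('a \<Rightarrow> 'a \<Rightarrow> 'a set) \<Rightarrow> 'a set \<Rightarrow> 'a set \<Rightarrow> 'a set" where
  "hsetprod m A B = (\<Union>a\<in>A. \<Union>b\<in>B. m a b)"

definition mult_hyperring :: "('a::ab_group_add \<Rightarrow> 'a \<Rightarrow> 'a set) \<Rightarrow> 'a \<Rightarrow> bool" where
  "mult_hyperring m e \<longleftrightarrow>
     (\<forall>a b. m a b \<noteq> {}) \<and>
     (\<forall>a b. m a b = m b a) \<and>
     (\<forall>a b c. hsetprod m (m a b) {c} = hsetprod m {a} (m b c)) \<and>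
     (\<forall>a b c. m a (b + c) \<subseteq> {x + y | x y. x \<in> m a b \<and> y \<in> m a c}) \<and>
     (\<forall>a b. m a (- b) = uminus ` m a b \<and> m (- a) b = uminus ` m a b) \<and>
     (\<forall>a. a \<in> m a e)"

definition hunit :: "('a \<Rightarrow> 'a \<Rightarrow> 'a set) \<Rightarrow> 'a \<Rightarrow> 'a \<Rightarrow> bool" where
  "hunit m e x \<longleftrightarrow> (\<exists>y. e \<in> m x y)"

fun hprod :: "('a \<Rightarrow> 'a \<Rightarrow> 'a set) \<Rightarrow> 'a \<Rightarrow> 'a list \<Rightarrow> 'a set" where
  "hprod m e [] = {e}"
| "hprod m e [x] = {x}"
| "hprod m e (x # y # rs) = hsetprod m {x} (hprod m e (y # rs))"

definition hpow :: "('a \<Rightarrow> 'a \<Rightarrow> 'a set) \<Rightarrow> 'a \<Rightarrow> 'a \<Rightarrow> nat \<Rightarrow> 'a set" where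
  "hpow m e r n = hprod m e (replicate n r)"

definition hradical :: "('a \<Rightarrow> 'a \<Rightarrow> 'a set) \<Rightarrow> 'a \<Rightarrow> 'a set \<Rightarrow> 'a set" where
  "hradical m e I = {r. \<exists>n\<ge>1. hpow m e r n \<subseteq> I}"

text \<open>Hyperideals (all hyperideals are C-hyperideals).\<close>
definition hyperideal :: "('a::ab_group_add \<Rightarrow> 'a \<Rightarrow> 'a set) \<Rightarrow> 'a \<Rightarrow> 'a set \<Rightarrow> bool" where
  "hyperideal m e I \<longleftrightarrow>
     I \<noteq> {} \<and>
     (\<forall>a\<in>I. \<forall>b\<in>I. a - b \<in> I) \<and>
     (\<forall>r a. a \<in> I \<longrightarrow> m r a \<subseteq> I) \<and>
     (\<forall>xs. xs \<noteq> [] \<longrightarrow> hprod m e xs \<inter> I \<noteq> {} \<longrightarrow> hprod m e xs \<subseteq> I)"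

definition maximal_hyperideal :: "('a::ab_group_add \<Rightarrow> 'a \<Rightarrow> 'a set) \<Rightarrow> 'a \<Rightarrow> 'a set \<Rightarrow> bool" where
  "maximal_hyperideal m e M \<longleftrightarrow>
     hyperideal m e M \<and> M \<noteq> UNIV \<and>
     (\<forall>J. hyperideal m e J \<longrightarrow> M \<subseteq> J \<longrightarrow> J = M \<or> J = UNIV)"

definition local_hyperring :: "('a::ab_group_add \<Rightarrow> 'a \<Rightarrow> 'a set) \<Rightarrow> 'a \<Rightarrow> bool" where
  "local_hyperring m e \<longleftrightarrow> (\<exists>!M. maximal_hyperideal m e M)"

definition primary_hyperideal :: "('a::ab_group_add \<Rightarrow> 'a \<Rightarrow> 'a set) \<Rightarrow> 'a \<Rightarrow> 'a set \<Rightarrow> bool" where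
  "primary_hyperideal m e Q \<longleftrightarrow>
     hyperideal m e Q \<and> Q \<noteq> {0} \<and> Q \<noteq> UNIV \<and>
     (\<forall>x y. m x y \<subseteq> Q \<longrightarrow> x \<in> Q \<or> y \<in> hradical m e Q)"

definition one_absorbing_primary :: "('a::ab_group_add \<Rightarrow> 'a \<Rightarrow> 'a set) \<Rightarrow> 'a \<Rightarrow> 'a set \<Rightarrow> bool" where
  "one_absorbing_primary m e I \<longleftrightarrow>
     hyperideal m e I \<and> I \<noteq> UNIV \<and>
     (\<forall>x y z. \<not> hunit m e x \<longrightarrow> \<not> hunit m e y \<longrightarrow> \<not> hunit m e z \<longrightarrow>
        hsetprod m (m x y) {z} \<subseteq> I \<longrightarrow> m x y \<subseteq> I \<or> z \<in> hradical m e I)"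

end

theory Submission
  imports Defs
begin

lemma mh_comm: "mult_hyperring m e \<Longrightarrow> m a b = m b a" unfolding mult_hyperring_def by (elim conjE) simp
lemma mh_ax: "mult_hyperring m e \<Longrightarrow> hsetprod m (m a b) {c} = hsetprod m {a} (m b c)" unfolding mult_hyperring_def by (elim conjE) simp
lemma mh_id: "mult_hyperring m e \<Longrightarrow> a \<in> m a e" unfolding mult_hyperring_def by (elim conjE) simp
lemma mh_ne: "mult_hyperring m e \<Longrightarrow> m a b \<noteq> {}" unfolding mult_hyperring_def by (elim conjE) simp
lemma mh_distr: "mult_hyperring m e \<Longrightarrow> m a (b + c) \<subseteq> {x + y | x y. x \<in> m a b \<and> y \<in> m a c}" unfolding mult_hyperring_def by (elim conjE) blast
lemma mh_neg: "mult_hyperring m e \<Longrightarrow> m a (- b) = uminus ` m a b" unfolding mult_hyperring_def by (elim conjE) simp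
lemma hi_ne: "hyperideal m e I \<Longrightarrow> I \<noteq> {}" unfolding hyperideal_def by (elim conjE) simp
lemma hi_sub: "hyperideal m e I \<Longrightarrow> a \<in> I \<Longrightarrow> b \<in> I \<Longrightarrow> a - b \<in> I" unfolding hyperideal_def by (elim conjE) simp
lemma hi_abs: "hyperideal m e I \<Longrightarrow> a \<in> I \<Longrightarrow> m r a \<subseteq> I" unfolding hyperideal_def by (elim conjE) simp
lemma hi_C: "hyperideal m e I \<Longrightarrow> xs \<noteq> [] \<Longrightarrow> hprod m e xs \<inter> I \<noteq> {} \<Longrightarrow> hprod m e xs \<subseteq> I" unfolding hyperideal_def by (elim conjE) simp
lemma oa_E: "one_absorbing_primary m e I \<Longrightarrow> \<not> hunit m e x \<Longrightarrow> \<not> hunit m e y \<Longrightarrow> \<not> hunit m e z \<Longrightarrow>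
        hsetprod m (m x y) {z} \<subseteq> I \<Longrightarrow> m x y \<subseteq> I \<or> z \<in> hradical m e I"
  unfolding one_absorbing_primary_def by (elim conjE) blast
lemma oa_U: "one_absorbing_primary m e I \<Longrightarrow> I \<noteq> UNIV"
  unfolding one_absorbing_primary_def by (elim conjE) simp
lemma pr_U: "primary_hyperideal m e I \<Longrightarrow> I \<noteq> UNIV"
  unfolding primary_hyperideal_def by (elim conjE) simp
lemma pr_E: "primary_hyperideal m e I \<Longrightarrow> m a b \<subseteq> I \<Longrightarrow> a \<in> I \<or> b \<in> hradical m e I"
  unfolding primary_hyperideal_def by (elim conjE) blast

lemma hs_assoc:
  assumes "mult_hyperring m e"
  shows "hsetprod m (hsetprod m A B) C = hsetprod m A (hsetprod m B C)"
proof -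
  have ax: "\<And>a b c. hsetprod m (m a b) {c} = hsetprod m {a} (m b c)"
    using mh_ax[OF assms] .
  show ?thesis
  proof (rule set_eqI)
    fix w
    show "w \<in> hsetprod m (hsetprod m A B) C \<longleftrightarrow> w \<in> hsetprod m A (hsetprod m B C)"
    proof
      assume "w \<in> hsetprod m (hsetprod m A B) C"
      then obtain a b c d where "a\<in>A" "b\<in>B" "c\<in>C" "d \<in> m a b" "w \<in> m d c"
        unfolding hsetprod_def by blast
      then have "w \<in> hsetprod m (m a b) {c}" unfolding hsetprod_def by blast
      then have "w \<in> hsetprod m {a} (m b c)" using ax by simp
      then show "w \<in> hsetprod m A (hsetprod m B C)"
        using \<open>a\<in>A\<close> \<open>b\<in>B\<close> \<open>c\<in>C\<close> unfolding hsetprod_def by blast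
    next
      assume "w \<in> hsetprod m A (hsetprod m B C)"
      then obtain a b c d where "a\<in>A" "b\<in>B" "c\<in>C" "d \<in> m b c" "w \<in> m a d"
        unfolding hsetprod_def by blast
      then have "w \<in> hsetprod m {a} (m b c)" unfolding hsetprod_def by blast
      then have "w \<in> hsetprod m (m a b) {c}" using ax by simp
      then show "w \<in> hsetprod m (hsetprod m A B) C"
        using \<open>a\<in>A\<close> \<open>b\<in>B\<close> \<open>c\<in>C\<close> unfolding hsetprod_def by blast
    qed
  qed
qed

lemma hs_single: "hsetprod m {a} {b} = m a b"
  unfolding hsetprod_def by simp

lemma hprod_snoc:
  assumes "mult_hyperring m e" "xs \<noteq> []"
  shows "hprod m e (xs @ [z]) = hsetprod m (hprod m e xs) {z}"
  using assms(2)
proof (induction xs)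
  case Nil then show ?case by simp
next
  case (Cons a ys)
  show ?case
  proof (cases "ys = []")
    case True then show ?thesis by (simp add: hs_single)
  next
    case False
    then obtain b zs where ys: "ys = b # zs" by (cases ys) auto
    have "hprod m e ((a # ys) @ [z]) = hsetprod m {a} (hprod m e (ys @ [z]))"
      using ys by simp
    also have "\<dots> = hsetprod m {a} (hsetprod m (hprod m e ys) {z})"
      using Cons.IH False by simp
    also have "\<dots> = hsetprod m (hsetprod m {a} (hprod m e ys)) {z}"
      using hs_assoc[OF assms(1)] by simp
    also have "\<dots> = hsetprod m (hprod m e (a # ys)) {z}" using ys by simp
    finally show ?thesis .
  qed
qed

lemma absorb:
  assumes "hyperideal m e I" "A \<subseteq> I"
  shows "hsetprod m B A \<subseteq> I"
  using hi_abs[OF assms(1)] assms(2) unfolding hsetprod_def by blast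

lemma unit_in_ideal_univ:
  assumes mh: "mult_hyperring m e" and "hyperideal m e J" "a \<in> J" "hunit m e a"
  shows "J = UNIV"
proof -
  obtain a' where "e \<in> m a a'" using assms(4) unfolding hunit_def by blast
  have "m a a' = m a' a" using mh_comm[OF mh] .
  then have "e \<in> J" using hi_abs[OF assms(2,3)] \<open>e \<in> m a a'\<close> by blast
  moreover have "\<And>r. r \<in> m r e" using mh_id[OF mh] .
  ultimately show ?thesis using hi_abs[OF assms(2)] by blast
qed

theorem mainTheorem7:
  fixes m :: "'a::ab_group_add \<Rightarrow> 'a \<Rightarrow> 'a set" and e :: 'a and I :: "'a set"
  assumes "mult_hyperring m e"
    and "\<not> local_hyperring m e"
    and "hyperideal m e I"
    and "I \<noteq> {0}"
  shows "one_absorbing_primary m e I \<longleftrightarrow> primary_hyperideal m e I"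
proof -
  note mh = assms(1) and hI = assms(3)
  have comm: "\<And>a b. m a b = m b a" using mh_comm[OF mh] .
  have ax: "\<And>a b c. hsetprod m (m a b) {c} = hsetprod m {a} (m b c)" using mh_ax[OF mh] .
  have idr: "\<And>a. a \<in> m a e" using mh_id[OF mh] .
  have ne: "\<And>a b. m a b \<noteq> {}" using mh_ne[OF mh] .
  have distr: "\<And>a b c. m a (b + c) \<subseteq> {x + y | x y. x \<in> m a b \<and> y \<in> m a c}"
    using mh_distr[OF mh] .
  have neg: "\<And>a b. m a (- b) = uminus ` m a b" using mh_neg[OF mh] .
  have Isub: "\<And>a b. a \<in> I \<Longrightarrow> b \<in> I \<Longrightarrow> a - b \<in> I" using hi_sub[OF hI] .
  have Iabs: "\<And>r a. a \<in> I \<Longrightarrow> m r a \<subseteq> I" using hi_abs[OF hI] .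
  have IC: "\<And>xs. xs \<noteq> [] \<Longrightarrow> hprod m e xs \<inter> I \<noteq> {} \<Longrightarrow> hprod m e xs \<subseteq> I"
    using hi_C[OF hI] .
  have Irad: "I \<subseteq> hradical m e I"
    unfolding hradical_def hpow_def by (auto intro!: exI[of _ 1])
  show ?thesis
  proof
    assume oa: "one_absorbing_primary m e I"
    have IU: "I \<noteq> UNIV" using oa_U[OF oa] .
    have main: "x \<in> I \<or> y \<in> hradical m e I" if xy: "m x y \<subseteq> I" for x y
    proof (cases "hunit m e x")
      case True
      then obtain x' where "e \<in> m x x'" unfolding hunit_def by blast
      have "y \<in> hsetprod m {y} (m x x')" using idr[of y] \<open>e \<in> m x x'\<close>
        unfolding hsetprod_def by blast
      also have "\<dots> = hsetprod m (m y x) {x'}" using ax by simp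
      also have "\<dots> = hsetprod m {x'} (m x y)" using comm unfolding hsetprod_def by auto
      also have "\<dots> \<subseteq> I" using absorb[OF hI xy] .
      finally show ?thesis using Irad by blast
    next
      case nx: False
      show ?thesis
      proof (cases "hunit m e y")
        case True
        then obtain y' where "e \<in> m y y'" unfolding hunit_def by blast
        have "x \<in> hsetprod m {x} (m y y')" using idr[of x] \<open>e \<in> m y y'\<close>
          unfolding hsetprod_def by blast
        also have "\<dots> = hsetprod m (m x y) {y'}" using ax by simp
        also have "\<dots> = hsetprod m {y'} (m x y)" using comm unfolding hsetprod_def by auto
        also have "\<dots> \<subseteq> I" using absorb[OF hI xy] .
        finally show ?thesis by blast
      next
        case ny: False
        show ?thesis
        proof (rule ccontr)
          assume nn: "\<not> (x \<in> I \<or> y \<in> hradical m e I)"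
          define L where "L = {r. m r x \<subseteq> I}"
          have nonL: "a \<in> L" if "\<not> hunit m e a" for a
          proof -
            have "hsetprod m (m a x) {y} = hsetprod m {a} (m x y)" using ax by simp
            also have "\<dots> \<subseteq> I" using absorb[OF hI xy] .
            finally have "m a x \<subseteq> I \<or> y \<in> hradical m e I"
              using oa_E[OF oa that nx ny] by blast
            then show ?thesis using nn unfolding L_def by blast
          qed
          have eL: "e \<notin> L" using nn idr[of x] comm[of e x] unfolding L_def by blast
          have ILsub: "I \<subseteq> L" unfolding L_def using Iabs comm by blast
          have hL: "hyperideal m e L"
            unfolding hyperideal_def
          proof (intro conjI allI impI ballI)
            show "L \<noteq> {}" using ILsub hi_ne[OF hI] by blast
          next
            fix a b assume "a \<in> L" "b \<in> L"
            have "m (a - b) x = m x (a + - b)" using comm by simp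
            also have "\<dots> \<subseteq> {u + v | u v. u \<in> m x a \<and> v \<in> m x (- b)}" using distr .
            also have "\<dots> \<subseteq> I"
            proof
              fix w assume "w \<in> {u + v | u v. u \<in> m x a \<and> v \<in> m x (- b)}"
              then obtain u v where w: "w = u + v" "u \<in> m x a" "v \<in> m x (- b)" by blast
              then obtain t where t: "t \<in> m x b" "v = - t" using neg by blast
              have "u \<in> I" using w(2) \<open>a \<in> L\<close> comm unfolding L_def by blast
              moreover have "t \<in> I" using t(1) \<open>b \<in> L\<close> comm unfolding L_def by blast
              ultimately have "u - t \<in> I" using Isub by blast
              then show "w \<in> I" using w t by simp
            qed
            finally show "a - b \<in> L" unfolding L_def by blast
          next
            fix r a assume "a \<in> L"
            show "m r a \<subseteq> L"
            proof
              fix c assume "c \<in> m r a"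
              have "m c x \<subseteq> hsetprod m (m r a) {x}" using \<open>c \<in> m r a\<close> unfolding hsetprod_def by blast
              also have "\<dots> = hsetprod m {r} (m a x)" using ax by simp
              also have "\<dots> \<subseteq> I" using absorb[OF hI] \<open>a \<in> L\<close> unfolding L_def by blast
              finally show "c \<in> L" unfolding L_def by blast
            qed
          next
            fix xs :: "'a list" assume xs: "xs \<noteq> []" "hprod m e xs \<inter> L \<noteq> {}"
            then obtain c where c: "c \<in> hprod m e xs" "c \<in> L" by blast
            have eq: "hprod m e (xs @ [x]) = hsetprod m (hprod m e xs) {x}"
              using hprod_snoc[OF mh xs(1)] .
            have "m c x \<subseteq> hprod m e (xs @ [x])" using c(1) eq unfolding hsetprod_def by blast
            moreover have "m c x \<subseteq> I" using c(2) unfolding L_def by blast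
            ultimately have "hprod m e (xs @ [x]) \<inter> I \<noteq> {}" using ne[of c x] by blast
            then have "hprod m e (xs @ [x]) \<subseteq> I" using IC by simp
            then show "hprod m e xs \<subseteq> L" using eq unfolding L_def hsetprod_def by blast
          qed
          have proper_sub: "J \<subseteq> L" if "hyperideal m e J" "J \<noteq> UNIV" for J
            using unit_in_ideal_univ[OF mh that(1)] that(2) nonL by blast
          have LU: "L \<noteq> UNIV" using eL by blast
          have maxL: "maximal_hyperideal m e L"
            unfolding maximal_hyperideal_def using hL LU proper_sub by blast
          have "\<exists>!M. maximal_hyperideal m e M"
          proof (rule ex1I[of _ L])
            show "maximal_hyperideal m e L" by (rule maxL)
          next
            fix M assume "maximal_hyperideal m e M"
            then have "hyperideal m e M" "M \<noteq> UNIV"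
              "\<And>J. hyperideal m e J \<Longrightarrow> M \<subseteq> J \<Longrightarrow> J = M \<or> J = UNIV"
              unfolding maximal_hyperideal_def by blast+
            then show "M = L" using proper_sub hL LU by blast
          qed
          then show False using assms(2) unfolding local_hyperring_def by blast
        qed
      qed
    qed
    show "primary_hyperideal m e I"
      unfolding primary_hyperideal_def using hI assms(4) IU main by simp
  next
    assume pr: "primary_hyperideal m e I"
    have IU: "I \<noteq> UNIV" using pr_U[OF pr] .
    have P: "\<And>a b. m a b \<subseteq> I \<Longrightarrow> a \<in> I \<or> b \<in> hradical m e I"
      using pr_E[OF pr] .
    have "m x y \<subseteq> I \<or> z \<in> hradical m e I"
      if "hsetprod m (m x y) {z} \<subseteq> I" for x y z
    proof (cases "z \<in> hradical m e I")
      case False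
      have "a \<in> I" if "a \<in> m x y" for a
      proof -
        have "m a z \<subseteq> I" using \<open>hsetprod m (m x y) {z} \<subseteq> I\<close> that unfolding hsetprod_def by blast
        then show ?thesis using P False by blast
      qed
      then show ?thesis by blast
    qed simp
    then show "one_absorbing_primary m e I"
      unfolding one_absorbing_primary_def using hI IU by simp
  qed
qed

end
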